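(* Let $\Lambda\subseteq\Sigma_A$ and $\Gamma\subseteq\Sigma_B$ be shift spaces. Take $d\in B$ and suppose $\Phi:\Lambda\to\Gamma$ is a map such that $\Phi(\mathcal O)=(ddd\dots)$ (the constant sequence with symbol $d$) and such that $C_\varepsilon:=\Phi^{-1}(\mathcal O)$ is finitely defined in $\Lambda$ in the case that $\mathcal O\in\Gamma$. Then $\Phi$ is continuous and commutes with the shift map if, and only if, $\Phi$ is a sliding block code given by $\bigl(\Phi(x)\bigr)_n=\sum_{a\in L_\Gamma\cup\{\varepsilon\}}a\mathbf{1}_{C_a}\circ\sigma^{n-1}(x)$ such that, for all $a\in L_\Gamma$, the set $C_a$ is a finite (possibly empty) union of generalized cylinders of $\Lambda$, with the following properties: (1) $C_a$ is empty for all but finitely many $a\in L_\Gamma$; and (2) for each $M\ge1$ there exists a finite set $F_M\subset L_\Lambda$ such that $\sigma^{n-1}\bigl(Z(\mathcal O,F_M)\cap\Lambda\bigr)\subseteq C_d$ for all $1\le n\le M$.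
   Context: Alphabets and sequences: $A$ (and similarly $B$) is a countable discrete alphabet, finite or infinite. Let $\varepsilon$ be a new symbol (the empty letter), $\tilde A=A\cup\{\varepsilon\}$. Put $\Sigma_A^{\mathrm{inf}}=A^{\mathbb N}$ and let $\Sigma_A^{\mathrm{fin}}$ be the set of sequences $(x_i)_{i\in\mathbb N}$ in $\tilde A$ containing at least one $\varepsilon$ such that $x_i=\varepsilon$ implies $x_{i+1}=\varepsilon$. The Ott–Tomforde–Willis full shift is $\Sigma_A=\Sigma_A^{\mathrm{inf}}$ if $A$ is finite and $\Sigma_A=\Sigma_A^{\mathrm{inf}}\cup\Sigma_A^{\mathrm{fin}}$ if $A$ is infinite. The length of $x$ is $l(x)=\min\{k-1: x_k=\varepsilon\}$ ($=\infty$ for $x\in A^{\mathbb N}$); a finite sequence of length $k$ is identified with the word $x_1\dots x_k$; the constant sequence $\mathcal O=(\varepsilon\varepsilon\varepsilon\dots)$ is the empty sequence. For $x\in\Sigma_A^{\mathrm{fin}}$ and finite $F\subset A$, the generalized cylinder is $Z(x,F)=\{y\in\Sigma_A: y_i=x_i \text{ for } 1\le i\le l(x),\ y_{l(x)+1}\notin F\}$ (so $Z(\mathcal O,F)=\{y: y_1\notin F\}$). $\Sigma_A$ carries the topology generated by the generalized cylinders. The shift map is $\sigma((x_i)_{i})=(x_{i+1})_i$ (so $\sigma(\mathcal O)=\mathcal O$). For $\Lambda\subseteq\Sigma_A$: $\Lambda^{\mathrm{fin}}=\Lambda\cap\Sigma_A^{\mathrm{fin}}$, $\Lambda^{\mathrm{inf}}=\Lambda\cap\Sigma_A^{\mathrm{inf}}$;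 $B_n(\Lambda)\subseteq\tilde A^n$ is the set of words of length $n$ occurring as consecutive subblocks of elements of $\Lambda$, $B(\Lambda)=\bigcup_{n}B_n(\Lambda)$, $L_\Lambda=B_1(\Lambda)\setminus\{\varepsilon\}$. Follower set: $\mathcal F(\Lambda,a)=\{b\in B_1(\Lambda): ab\in B_{n+1}(\Lambda)\}$ for $a\in B_n(\Lambda)$. A shift space is $\Lambda\subseteq\Sigma_A$ that is closed, satisfies $\sigma(\Lambda)\subseteq\Lambda$, and has the infinite extension property: $\mathcal O\in\Lambda$ iff $L_\Lambda$ is infinite, and a finite sequence $x\neq\mathcal O$ lies in $\Lambda$ iff $|\mathcal F(\Lambda,x)|=\infty$. Generalized cylinders of $\Lambda$ are the sets $Z(x,F)\cap\Lambda$. Finitely defined sets: $C\subseteq\Lambda$ is finitely defined in $\Lambda$ if there exist $I,J\subseteq\mathbb N$, integers $\ell_i,n_j\ge0$ and words $b_i,d_j\in B(\Sigma_A)$ with $C=\{x\in\Lambda: (x_1\dots x_{1+\ell_i})=b_i\text{ for some } i\in I\}$ and $\Lambda\setminus C=\{x\in\Lambda: (x_1\dots x_{1+n_j})=d_j \text{ for some } j\in J\}$. Sliding block codes: given a partition $\{C_a\}_{a\in B\cup\{\varepsilon\}}$ of a shift space $\Lambda$ such that each $C_a$ is finitely defined in $\Lambda$ and $\sigma(C_\varepsilon)\subseteq C_\varepsilon$, the map $\Phi:\Lambda\to\Sigma_B$ with $(\Phi(x))_n$ equal to the unique $a$ with $\sigma^{n-1}(x)\in C_a$ is a sliding block code.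 *)

theory Defs
  imports "HOL-Analysis.Analysis"
begin

text \<open>Sequences over the extended alphabet: None plays the role of the empty letter.
  Indexing is 0-based: position i in Isabelle is position i+1 in the paper.\<close>

type_synonym 'a seq = "nat \<Rightarrow> 'a option"

definition Sigma_inf :: "'a seq set" where
  "Sigma_inf = {x. \<forall>i. x i \<noteq> None}"

definition Sigma_fin :: "'a seq set" where
  "Sigma_fin = {x. (\<exists>i. x i = None) \<and> (\<forall>i. x i = None \<longrightarrow> x (Suc i) = None)}"

definition full_shift :: "'a::countable seq set" where
  "full_shift = (if finite (UNIV :: 'a set) then Sigma_inf else Sigma_inf \<union> Sigma_fin)"

definition empty_seq :: "'a seq" where
  "empty_seq = (\<lambda>_. None)"

definition seq_len :: "'a seq \<Rightarrow> nat" where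
  "seq_len x = (LEAST i. x i = None)"

definition seq_word :: "'a seq \<Rightarrow> 'a option list" where
  "seq_word x = map x [0..<seq_len x]"

definition prefix_word :: "'a seq \<Rightarrow> nat \<Rightarrow> 'a option list" where
  "prefix_word x n = map x [0..<n]"

definition gen_cyl :: "'a::countable seq \<Rightarrow> 'a set \<Rightarrow> 'a seq set" where
  "gen_cyl x F = {y \<in> full_shift. (\<forall>i < seq_len x. y i = x i) \<and> y (seq_len x) \<notin> Some ` F}"

definition gen_cylinders :: "'a::countable seq set set" where
  "gen_cylinders = {gen_cyl x F | x F. x \<in> Sigma_fin \<and> finite F}"

definition shift_top :: "'a::countable seq topology" where
  "shift_top = topology_generated_by gen_cylinders"

definition shift :: "'a seq \<Rightarrow> 'a seq" where
  "shift x = (\<lambda>i. x (Suc i))"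

definition blocks :: "'a seq set \<Rightarrow> 'a option list set" where
  "blocks L = {w. \<exists>x\<in>L. \<exists>i. w = map (\<lambda>j. x (i + j)) [0..<length w]}"

definition letters :: "'a seq set \<Rightarrow> 'a set" where
  "letters L = {a. [Some a] \<in> blocks L}"

definition follower :: "'a seq set \<Rightarrow> 'a option list \<Rightarrow> 'a option set" where
  "follower L w = {b. [b] \<in> blocks L \<and> w @ [b] \<in> blocks L}"

definition shift_space :: "'a::countable seq set \<Rightarrow> bool" where
  "shift_space L \<longleftrightarrow>
     L \<subseteq> full_shift \<and>
     closedin shift_top L \<and>
     shift ` L \<subseteq> L \<and>
     (empty_seq \<in> L \<longleftrightarrow> infinite (letters L)) \<and>
     (\<forall>x \<in> full_shift \<inter> Sigma_fin. x \<noteq> empty_seq \<longrightarrow>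
         (x \<in> L \<longleftrightarrow> infinite (follower L (seq_word x))))"

text \<open>finitely defined sets (words b_i, d_j of length 1 + l_i, 1 + n_j respectively)\<close>
definition finitely_defined :: "'a::countable seq set \<Rightarrow> 'a seq set \<Rightarrow> bool" where
  "finitely_defined L C \<longleftrightarrow> C \<subseteq> L \<and>
     (\<exists>(I::nat set) (J::nat set) (l::nat \<Rightarrow> nat) (n::nat \<Rightarrow> nat)
        (b::nat \<Rightarrow> 'a option list) (d::nat \<Rightarrow> 'a option list).
        (\<forall>i\<in>I. b i \<in> blocks (full_shift :: 'a seq set)) \<and>
        (\<forall>j\<in>J. d j \<in> blocks (full_shift :: 'a seq set)) \<and>
        C = {x \<in> L. \<exists>i\<in>I. prefix_word x (1 + l i) = b i} \<and>
        L - C = {x \<in> L. \<exists>j\<in>J. prefix_word x (1 + n j) = d j})"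

definition sliding_block_code ::
  "'a::countable seq set \<Rightarrow> ('b option \<Rightarrow> 'a seq set) \<Rightarrow> ('a seq \<Rightarrow> 'b seq) \<Rightarrow> bool" where
  "sliding_block_code L C Phi \<longleftrightarrow>
     (\<forall>a b. a \<noteq> b \<longrightarrow> C a \<inter> C b = {}) \<and>
     (\<Union>a. C a) = L \<and>
     (\<forall>a. finitely_defined L (C a)) \<and>
     shift ` C None \<subseteq> C None \<and>
     (\<forall>x\<in>L. \<forall>n. Phi x n = (THE a. (shift ^^ n) x \<in> C a))"

end

theory Submission
  imports Defs
begin

lemma fs_char:
  "(x::'a::countable seq) \<in> full_shift \<longleftrightarrow>
     (\<forall>i. x i = None \<longrightarrow> x (Suc i) = None) \<and> (finite (UNIV::'a set) \<longrightarrow> (\<forall>i. x i \<noteq> None))"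
  apply (auto simp: full_shift_def Sigma_inf_def Sigma_fin_def)
  by (metis option.distinct(1))+

lemma fs_mono:
  assumes "x \<in> full_shift" "x i = None" "i \<le> j" shows "x j = None"
  using assms(3,2)
proof (induction j rule: dec_induct)
  case base then show ?case by simp
next
  case (step n) then show ?case using assms(1) by (auto simp: fs_char)
qed

lemma fs_shift: "x \<in> full_shift \<Longrightarrow> shift x \<in> full_shift"
  by (auto simp: fs_char shift_def)

lemma shift_pow: "(shift ^^ n) x j = x (n + j)"
  by (induction n arbitrary: j) (auto simp: shift_def)

lemma fs_shift_pow: "x \<in> full_shift \<Longrightarrow> (shift ^^ n) x \<in> full_shift"
  by (induction n) (auto simp: fs_shift)

definition seqof :: "'a list \<Rightarrow> 'a seq" where
  "seqof w = (\<lambda>i. if i < length w then Some (w!i) else None)"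

definition cyl :: "'a::countable list \<Rightarrow> 'a set \<Rightarrow> 'a seq set" where
  "cyl w F = {y \<in> full_shift. (\<forall>i<length w. y i = Some (w!i)) \<and> y (length w) \<notin> Some ` F}"

lemma seq_len_seqof: "seq_len (seqof w) = length w"
  unfolding seq_len_def seqof_def by (rule Least_equality) (auto split: if_splits)

lemma seqof_fin: "seqof w \<in> Sigma_fin"
  unfolding Sigma_fin_def seqof_def by (auto intro: exI[of _ "length w"])

lemma seqof_empty: "seqof [] = empty_seq"
  by (auto simp: seqof_def empty_seq_def)

lemma fin_len:
  assumes "u \<in> Sigma_fin"
  shows "u (seq_len u) = None" "\<And>i. i < seq_len u \<Longrightarrow> u i \<noteq> None"
    "\<And>i. seq_len u \<le> i \<Longrightarrow> u i = None"
proof -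
  from assms obtain j where j: "u j = None" by (auto simp: Sigma_fin_def)
  show 1: "u (seq_len u) = None" unfolding seq_len_def by (rule LeastI[of _ j]) (rule j)
  show "\<And>i. i < seq_len u \<Longrightarrow> u i \<noteq> None" unfolding seq_len_def using not_less_Least by blast
  show "\<And>i. seq_len u \<le> i \<Longrightarrow> u i = None"
  proof -
    fix i assume "seq_len u \<le> i"
    then show "u i = None"
    proof (induction i rule: dec_induct)
      case base then show ?case by (rule 1)
    next
      case (step n) then show ?case using assms by (auto simp: Sigma_fin_def)
    qed
  qed
qed

lemma fin_seqof:
  assumes "u \<in> Sigma_fin"
  shows "u = seqof (map (the \<circ> u) [0..<seq_len u])"
  using fin_len[OF assms] by (auto simp: seqof_def not_less)

lemma gen_cyl_seqof: "gen_cyl (seqof w) F = cyl w F"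
  unfolding gen_cyl_def cyl_def seq_len_seqof by (auto simp: seqof_def)

lemma gen_cylinders_eq: "gen_cylinders = {cyl w F | w F. finite F}"
proof -
  have "gen_cyl u F \<in> {cyl w F | w F. finite F}" if "u \<in> Sigma_fin" "finite F" for u F
  proof -
    have "gen_cyl u F = cyl (map (the \<circ> u) [0..<seq_len u]) F"
      by (subst fin_seqof[OF that(1)]) (rule gen_cyl_seqof)
    then show ?thesis using that(2) by blast
  qed
  moreover have "cyl w F \<in> gen_cylinders" if "finite F" for w F
    using that gen_cyl_seqof[of w F] seqof_fin[of w] unfolding gen_cylinders_def by blast
  ultimately show ?thesis unfolding gen_cylinders_def by blast
qed

lemma cyl_sub: "cyl w F \<subseteq> full_shift" by (auto simp: cyl_def)

lemma cyl_nil: "cyl [] {} = full_shift" by (auto simp: cyl_def)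

lemma topspace_shift: "topspace shift_top = full_shift"
proof -
  have "\<Union>gen_cylinders = full_shift"
  proof
    show "\<Union>gen_cylinders \<subseteq> full_shift" unfolding gen_cylinders_eq using cyl_sub by auto
    show "full_shift \<subseteq> \<Union>gen_cylinders" unfolding gen_cylinders_eq
      using cyl_nil by auto
  qed
  then show ?thesis unfolding shift_top_def topology_generated_by_topspace by simp
qed

lemma cyl_open: "finite F \<Longrightarrow> openin shift_top (cyl w F)"
  unfolding shift_top_def by (rule topology_generated_by_Basis) (auto simp: gen_cylinders_eq)

lemma cyl_Int:
  assumes z1: "z \<in> cyl w F" and z2: "z \<in> cyl v G" and fin: "finite F" "finite G"
  shows "\<exists>q H. finite H \<and> z \<in> cyl q H \<and> cyl q H \<subseteq> cyl w F \<inter> cyl v G"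
proof -
  define k where "k = length w"
  define m where "m = length v"
  define p where "p = (LEAST i. z i = None \<or> max k m < i)"
  have pP: "z p = None \<or> max k m < p" unfolding p_def by (rule LeastI[of _ "Suc (max k m)"]) simp
  have pl: "\<And>i. i < p \<Longrightarrow> z i \<noteq> None \<and> i \<le> max k m" unfolding p_def using not_less_Least by fastforce
  have zfs: "z \<in> full_shift" using z1 by (auto simp: cyl_def)
  have kp: "k \<le> p"
  proof (rule ccontr)
    assume "\<not> k \<le> p"
    then have "z p = Some (w!p)" "p \<le> max k m" using z1 by (auto simp: cyl_def k_def)
    then show False using pP by auto
  qed
  have mp: "m \<le> p"
  proof (rule ccontr)
    assume "\<not> m \<le> p"
    then have "z p = Some (v!p)" "p \<le> max k m" using z2 by (auto simp: cyl_def m_def)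
    then show False using pP by auto
  qed
  define q where "q = map (the \<circ> z) [0..<p]"
  define H where "H = (if p = k then F else {}) \<union> (if p = m then G else {})"
  have lq: "length q = p" by (simp add: q_def)
  have zq: "\<And>i. i < p \<Longrightarrow> z i = Some (q!i)" using pl by (auto simp: q_def)
  have "z \<in> cyl q H"
  proof -
    have "z p \<notin> Some ` H"
    proof (cases "z p = None")
      case False
      then have "max k m < p" using pP by auto
      then show ?thesis by (auto simp: H_def)
    qed simp
    then show ?thesis using zfs zq lq by (auto simp: cyl_def)
  qed
  moreover have "cyl q H \<subseteq> cyl w F \<inter> cyl v G"
  proof
    fix y assume y: "y \<in> cyl q H"
    then have yz: "\<And>i. i < p \<Longrightarrow> y i = z i" "y p \<notin> Some ` H" "y \<in> full_shift"
      using zq lq by (auto simp: cyl_def)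
    have "y \<in> cyl w F"
    proof -
      have "\<forall>i<k. y i = Some (w!i)" using yz(1) kp z1 by (auto simp: cyl_def k_def)
      moreover have "y k \<notin> Some ` F"
      proof (cases "k < p")
        case True then show ?thesis using yz(1) z1 by (auto simp: cyl_def k_def)
      next
        case False then have "k = p" using kp by simp
        then show ?thesis using yz(2) by (auto simp: H_def)
      qed
      ultimately show ?thesis using yz(3) by (auto simp: cyl_def k_def)
    qed
    moreover have "y \<in> cyl v G"
    proof -
      have "\<forall>i<m. y i = Some (v!i)" using yz(1) mp z2 by (auto simp: cyl_def m_def)
      moreover have "y m \<notin> Some ` G"
      proof (cases "m < p")
        case True then show ?thesis using yz(1) z2 by (auto simp: cyl_def m_def)
      next
        case False then have "m = p" using mp by simp
        then show ?thesis using yz(2) by (auto simp: H_def)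
      qed
      ultimately show ?thesis using yz(3) by (auto simp: cyl_def m_def)
    qed
    ultimately show "y \<in> cyl w F \<inter> cyl v G" by blast
  qed
  moreover have "finite H" using fin by (auto simp: H_def)
  ultimately show ?thesis by (intro exI[of _ q] exI[of _ H]) simp
qed

lemma nbhd:
  assumes "openin shift_top U" "z \<in> U"
  shows "\<exists>w F. finite F \<and> z \<in> cyl w F \<and> cyl w F \<subseteq> U"
proof -
  have "generate_topology_on gen_cylinders U"
    using assms(1) unfolding shift_top_def by (rule openin_topology_generated_by)
  then show ?thesis using assms(2)
  proof (induction arbitrary: z)
    case Empty then show ?case by simp
  next
    case (Int a b)
    have "z \<in> a" "z \<in> b" using Int.prems by auto
    obtain w F where "finite F" "z \<in> cyl w F" "cyl w F \<subseteq> a" using Int.IH(1)[OF \<open>z \<in> a\<close>] by blast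
    obtain v G where "finite G" "z \<in> cyl v G" "cyl v G \<subseteq> b" using Int.IH(2)[OF \<open>z \<in> b\<close>] by blast
    from cyl_Int[OF \<open>z \<in> cyl w F\<close> \<open>z \<in> cyl v G\<close> \<open>finite F\<close> \<open>finite G\<close>] obtain q H where
      "finite H" "z \<in> cyl q H" "cyl q H \<subseteq> cyl w F \<inter> cyl v G" by blast
    then show ?case using \<open>cyl w F \<subseteq> a\<close> \<open>cyl v G \<subseteq> b\<close> by blast
  next
    case (UN K)
    then obtain k where "k \<in> K" "z \<in> k" by blast
    from UN.IH[OF this] obtain w F where "finite F" "z \<in> cyl w F" "cyl w F \<subseteq> k" by blast
    then show ?case using \<open>k \<in> K\<close> by blast
  next
    case (Basis s) then show ?case by (auto simp: gen_cylinders_eq)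
  qed
qed

lemma sub_nbhd:
  assumes "openin (subtopology shift_top L) U" "z \<in> U"
  shows "\<exists>w F. finite F \<and> z \<in> cyl w F \<and> cyl w F \<inter> L \<subseteq> U"
proof -
  obtain T where T: "openin shift_top T" "U = T \<inter> L" using assms(1) by (auto simp: openin_subtopology)
  have "z \<in> T" using T(2) assms(2) by simp
  from nbhd[OF T(1) this] obtain w F where "finite F" "z \<in> cyl w F" "cyl w F \<subseteq> T" by blast
  moreover have "cyl w F \<inter> L \<subseteq> U" using T(2) \<open>cyl w F \<subseteq> T\<close> by blast
  ultimately show ?thesis using assms(2) by blast
qed

lemma sub_open:
  assumes "U \<subseteq> L" "\<And>z. z \<in> U \<Longrightarrow> \<exists>w F. finite F \<and> z \<in> cyl w F \<and> cyl w F \<inter> L \<subseteq> U"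
  shows "openin (subtopology shift_top L) U"
proof -
  define T where "T = \<Union>{cyl w F | w F. finite F \<and> cyl w F \<inter> L \<subseteq> U}"
  have "openin shift_top T" unfolding T_def by (rule openin_Union) (auto intro: cyl_open)
  moreover have "U = T \<inter> L"
  proof
    show "U \<subseteq> T \<inter> L"
    proof
      fix z assume "z \<in> U"
      then obtain w F where "finite F" "z \<in> cyl w F" "cyl w F \<inter> L \<subseteq> U" using assms(2) by blast
      then show "z \<in> T \<inter> L" unfolding T_def using assms(1) \<open>z \<in> U\<close> by blast
    qed
    show "T \<inter> L \<subseteq> U" unfolding T_def by blast
  qed
  ultimately show ?thesis by (auto simp: openin_subtopology)
qed


lemma cyl_compl:
  assumes y: "y \<in> full_shift" "y \<notin> cyl w F"
  shows "\<exists>v G. finite G \<and> y \<in> cyl v G \<and> cyl v G \<inter> cyl w F = {}"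
proof (cases "\<exists>i<length w. y i \<noteq> Some (w!i)")
  case True
  define i where "i = (LEAST i. i < length w \<and> y i \<noteq> Some (w!i))"
  have i1: "i < length w" "y i \<noteq> Some (w!i)" using LeastI_ex[OF True] unfolding i_def by auto
  have i2: "\<And>j. j < i \<Longrightarrow> y j = Some (w!j)"
  proof -
    fix j assume "j < i"
    then have "\<not> (j < length w \<and> y j \<noteq> Some (w!j))" unfolding i_def by (rule not_less_Least)
    then show "y j = Some (w!j)" using \<open>j < i\<close> i1(1) by auto
  qed
  have "y \<in> cyl (take i w) {w!i}" using y(1) i1 i2 by (auto simp: cyl_def min_def)
  moreover have "cyl (take i w) {w!i} \<inter> cyl w F = {}"
  proof (rule ccontr)
    assume "cyl (take i w) {w!i} \<inter> cyl w F \<noteq> {}"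
    then obtain x where "x \<in> cyl (take i w) {w!i}" "x \<in> cyl w F" by blast
    then have "x i \<notin> Some ` {w!i}" "x i = Some (w!i)" using i1(1) by (auto simp: cyl_def min_def)
    then show False by simp
  qed
  ultimately show ?thesis by blast
next
  case False
  then have ag: "\<forall>i<length w. y i = Some (w!i)" by auto
  then have "y (length w) \<in> Some ` F" using y by (auto simp: cyl_def)
  then obtain h where h: "y (length w) = Some h" "h \<in> F" by auto
  have "y \<in> cyl (w @ [h]) {}" using y(1) ag h(1) by (auto simp: cyl_def nth_append less_Suc_eq)
  moreover have "cyl (w @ [h]) {} \<inter> cyl w F = {}"
  proof (rule ccontr)
    assume "cyl (w @ [h]) {} \<inter> cyl w F \<noteq> {}"
    then obtain x where "x \<in> cyl (w @ [h]) {}" "x \<in> cyl w F" by blast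
    then have "x (length w) = Some h" "x (length w) \<notin> Some ` F" by (auto simp: cyl_def nth_append)
    then show False using h(2) by simp
  qed
  ultimately show ?thesis by blast
qed

lemma open_compl: "finite F \<Longrightarrow> openin shift_top (full_shift - cyl w F)"
proof (subst openin_subopen, intro ballI)
  fix y assume "y \<in> full_shift - cyl w F"
  then obtain v G where "finite G" "y \<in> cyl v G" "cyl v G \<inter> cyl w F = {}" using cyl_compl by blast
  then show "\<exists>T. openin shift_top T \<and> y \<in> T \<and> T \<subseteq> full_shift - cyl w F"
    using cyl_open[of G v] cyl_sub[of v G] by blast
qed

definition pdet :: "'a seq set \<Rightarrow> 'a seq set \<Rightarrow> nat \<Rightarrow> bool" where
  "pdet L C N \<longleftrightarrow> (\<forall>x\<in>L. \<forall>y\<in>L. (\<forall>i<N. x i = y i) \<longrightarrow> x \<in> C \<longrightarrow> y \<in> C)"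

lemma prefix_eq: "prefix_word x N = prefix_word y N \<longleftrightarrow> (\<forall>i<N. x i = y i)"
  unfolding prefix_word_def by (auto simp: map_eq_conv)

lemma prefix_blocks: "x \<in> full_shift \<Longrightarrow> prefix_word x N \<in> blocks full_shift"
  unfolding blocks_def prefix_word_def by (rule CollectI, rule bexI[of _ x]) (auto intro: exI[of _ 0])

lemma words_enum:
  fixes P :: "'a::countable option list set"
  assumes "P \<subseteq> blocks full_shift" "0 < N"
  obtains I :: "nat set" and l :: "nat \<Rightarrow> nat" and b :: "nat \<Rightarrow> 'a option list" where
    "\<forall>i\<in>I. b i \<in> blocks full_shift"
    "{x \<in> L. \<exists>i\<in>I. prefix_word x (1 + l i) = b i} = {x \<in> L. prefix_word x N \<in> P}"
proof (cases "P = {}")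
  case True
  show ?thesis by (rule that[of "{}"]) (use True in auto)
next
  case False
  have cP: "countable P" by (rule countableI_type)
  have N1: "1 + (N - 1) = N" using assms(2) by simp
  have "{x \<in> L. \<exists>i\<in>UNIV. prefix_word x (1 + (N - 1)) = from_nat_into P i} = {x \<in> L. prefix_word x N \<in> P}"
    unfolding N1
  proof safe
    fix x i assume "prefix_word x N = from_nat_into P i"
    then show "prefix_word x N \<in> P" using from_nat_into[OF False] by simp
  next
    fix x assume "prefix_word x N \<in> P"
    from from_nat_into_surj[OF cP this] obtain n where "from_nat_into P n = prefix_word x N" by blast
    then show "\<exists>i\<in>UNIV. prefix_word x N = from_nat_into P i" by (intro bexI[of _ n]) auto
  qed
  moreover have "\<forall>i\<in>UNIV. from_nat_into P i \<in> blocks full_shift" using from_nat_into[OF False] assms(1) by blast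
  ultimately show ?thesis by (intro that[of UNIV "from_nat_into P" "\<lambda>_. N - 1"])
qed

lemma fd_of_pdet:
  fixes L :: "'a::countable seq set"
  assumes "L \<subseteq> full_shift" "C \<subseteq> L" "pdet L C N" "0 < N"
  shows "finitely_defined L C"
proof -
  have P: "(\<lambda>x. prefix_word x N) ` C \<subseteq> blocks full_shift" "(\<lambda>x. prefix_word x N) ` (L - C) \<subseteq> blocks full_shift"
    using assms(1,2) prefix_blocks by (auto simp: subset_iff)
  have e1: "C = {x \<in> L. prefix_word x N \<in> (\<lambda>x. prefix_word x N) ` C}"
  proof
    show "C \<subseteq> {x \<in> L. prefix_word x N \<in> (\<lambda>x. prefix_word x N) ` C}" using assms(2) by blast
    show "{x \<in> L. prefix_word x N \<in> (\<lambda>x. prefix_word x N) ` C} \<subseteq> C"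
    proof safe
      fix x y assume "x \<in> L" "y \<in> C" "prefix_word x N = prefix_word y N"
      then have "y \<in> L" "\<forall>i<N. y i = x i" using assms(2) unfolding prefix_eq by auto
      then show "x \<in> C" using assms(3) \<open>x \<in> L\<close> \<open>y \<in> C\<close> unfolding pdet_def by blast
    qed
  qed
  have e2: "L - C = {x \<in> L. prefix_word x N \<in> (\<lambda>x. prefix_word x N) ` (L - C)}"
  proof
    show "L - C \<subseteq> {x \<in> L. prefix_word x N \<in> (\<lambda>x. prefix_word x N) ` (L - C)}" by blast
    show "{x \<in> L. prefix_word x N \<in> (\<lambda>x. prefix_word x N) ` (L - C)} \<subseteq> L - C"
    proof safe
      fix x y assume "x \<in> L" "y \<in> L" "y \<notin> C" "prefix_word x N = prefix_word y N" "x \<in> C"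
      then have "\<forall>i<N. x i = y i" unfolding prefix_eq by auto
      then show False using assms(3) \<open>x \<in> L\<close> \<open>y \<in> L\<close> \<open>x \<in> C\<close> \<open>y \<notin> C\<close> unfolding pdet_def by blast
    qed
  qed
  show ?thesis
  proof (rule words_enum[OF P(1) assms(4), of L])
    fix I :: "nat set" and b :: "nat \<Rightarrow> 'a option list" and l :: "nat \<Rightarrow> nat"
    assume 1: "\<forall>i\<in>I. b i \<in> blocks full_shift"
      "{x \<in> L. \<exists>i\<in>I. prefix_word x (1 + l i) = b i} = {x \<in> L. prefix_word x N \<in> (\<lambda>x. prefix_word x N) ` C}"
    show ?thesis
    proof (rule words_enum[OF P(2) assms(4), of L])
      fix J :: "nat set" and d :: "nat \<Rightarrow> 'a option list" and n :: "nat \<Rightarrow> nat"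
      assume 2: "\<forall>i\<in>J. d i \<in> blocks full_shift"
        "{x \<in> L. \<exists>i\<in>J. prefix_word x (1 + n i) = d i} = {x \<in> L. prefix_word x N \<in> (\<lambda>x. prefix_word x N) ` (L - C)}"
      show ?thesis unfolding finitely_defined_def
        apply (rule conjI[OF assms(2)])
        apply (rule exI[where x=I], rule exI[where x=J], rule exI[where x=l], rule exI[where x=n], rule exI[where x=b], rule exI[where x=d])
        using 1(1) 2(1) trans[OF e1 sym[OF 1(2)]] trans[OF e2 sym[OF 2(2)]] by (intro conjI)
    qed
  qed
qed

lemma pdet_mono: "pdet L C N \<Longrightarrow> N \<le> M \<Longrightarrow> pdet L C M"
  unfolding pdet_def
proof (intro ballI impI)
  fix x y assume "\<forall>x\<in>L. \<forall>y\<in>L. (\<forall>i<N. x i = y i) \<longrightarrow> x \<in> C \<longrightarrow> y \<in> C" "N \<le> M"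
    "x \<in> L" "y \<in> L" "\<forall>i<M. x i = y i" "x \<in> C"
  then show "y \<in> C" by (meson less_le_trans)
qed

lemma pdet_cyl:
  assumes "L \<subseteq> full_shift" shows "pdet L (cyl w F \<inter> L) (Suc (length w))"
  unfolding pdet_def
proof (intro ballI impI)
  fix x y assume xy: "x \<in> L" "y \<in> L" "\<forall>i<Suc (length w). x i = y i" "x \<in> cyl w F \<inter> L"
  then have "\<forall>i<length w. y i = Some (w!i)" "y (length w) \<notin> Some ` F"
    by (auto simp: cyl_def)
  then show "y \<in> cyl w F \<inter> L" using xy(2) assms by (auto simp: cyl_def)
qed


lemma pdet_empty: "pdet L {} N" by (simp add: pdet_def)

lemma pdet_Un: "pdet L A N \<Longrightarrow> pdet L B N \<Longrightarrow> pdet L (A \<union> B) N"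
  unfolding pdet_def by blast

lemma pdet_finite_union:
  fixes L :: "'a::countable seq set"
  assumes "L \<subseteq> full_shift" "finite G" "G \<subseteq> {Z \<inter> L | Z. Z \<in> gen_cylinders}"
  shows "\<exists>N. 0 < N \<and> pdet L (\<Union>G) N"
  using assms(2,3)
proof (induction G rule: finite_induct)
  case empty then show ?case by (intro exI[of _ 1]) (simp add: pdet_empty)
next
  case (insert g G)
  then obtain N where N: "0 < N" "pdet L (\<Union>G) N" by blast
  from insert.prems obtain w F where g: "g = cyl w F \<inter> L" by (auto simp: gen_cylinders_eq)
  have "pdet L g (max N (Suc (length w)))" unfolding g by (rule pdet_mono[OF pdet_cyl[OF assms(1)]]) simp
  moreover have "pdet L (\<Union>G) (max N (Suc (length w)))" by (rule pdet_mono[OF N(2)]) simp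
  ultimately have "pdet L (\<Union>(insert g G)) (max N (Suc (length w)))" using pdet_Un by fastforce
  then show ?case using N(1) by (intro exI[of _ "max N (Suc (length w))"]) simp
qed

subsection \<open>Cluster points\<close>

primrec clst :: "(nat \<Rightarrow> 'a seq) \<Rightarrow> nat \<Rightarrow> nat set \<times> bool" where
  "clst xs 0 = (UNIV, False)"
| "clst xs (Suc j) = (if \<not> snd (clst xs j) \<and> (\<exists>v. infinite {N \<in> fst (clst xs j). xs N j = v})
     then ({N \<in> fst (clst xs j). xs N j = (SOME v. infinite {N \<in> fst (clst xs j). xs N j = v})}, False)
     else (fst (clst xs j), True))"

definition cnd :: "(nat \<Rightarrow> 'a seq) \<Rightarrow> nat \<Rightarrow> bool" where
  "cnd xs j \<longleftrightarrow> \<not> snd (clst xs j) \<and> (\<exists>v. infinite {N \<in> fst (clst xs j). xs N j = v})"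

definition clz :: "(nat \<Rightarrow> 'a seq) \<Rightarrow> 'a seq" where
  "clz xs j = (if cnd xs j then SOME v. infinite {N \<in> fst (clst xs j). xs N j = v} else None)"

lemma clst_Suc:
  "fst (clst xs (Suc j)) = (if cnd xs j then {N \<in> fst (clst xs j). xs N j = clz xs j} else fst (clst xs j))"
  "snd (clst xs (Suc j)) = (\<not> cnd xs j)"
  by (simp_all add: cnd_def clz_def)

declare clst.simps(2)[simp del]

lemma clz_inf: "cnd xs j \<Longrightarrow> infinite {N \<in> fst (clst xs j). xs N j = clz xs j}"
  unfolding clz_def by (simp add: cnd_def) (rule someI_ex, blast)

lemma clst_inf: "infinite (fst (clst xs j))"
proof (induction j)
  case 0 then show ?case by simp
next
  case (Suc j) then show ?case using clz_inf[of xs j] by (simp add: clst_Suc)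
qed

lemma clst_alive: "\<not> snd (clst xs j) \<longleftrightarrow> (\<forall>i<j. cnd xs i)"
proof (induction j)
  case 0 then show ?case by simp
next
  case (Suc j)
  have "cnd xs j \<Longrightarrow> \<not> snd (clst xs j)" by (simp add: cnd_def)
  then show ?case using Suc by (auto simp: clst_Suc less_Suc_eq)
qed

lemma clst_agree: "N \<in> fst (clst xs j) \<Longrightarrow> i < j \<Longrightarrow> cnd xs i \<Longrightarrow> xs N i = clz xs i"
proof (induction j arbitrary: N)
  case 0 then show ?case by simp
next
  case (Suc j)
  have "N \<in> fst (clst xs j)" using Suc.prems(1) by (auto simp: clst_Suc split: if_splits)
  show ?case
  proof (cases "i = j")
    case True then show ?thesis using Suc.prems by (auto simp: clst_Suc)
  next
    case False then show ?thesis using Suc.IH[OF \<open>N \<in> fst (clst xs j)\<close>] Suc.prems by simp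
  qed
qed

lemma clz_None:
  assumes fs: "\<And>N. xs N \<in> full_shift" and z: "clz xs i = None"
  shows "clz xs (Suc i) = None"
proof (cases "cnd xs (Suc i)")
  case False then show ?thesis by (simp add: clz_def)
next
  case True
  then have "\<not> snd (clst xs (Suc i))" by (simp add: cnd_def)
  then have ci: "cnd xs i" by (simp add: clst_Suc)
  define S where "S = fst (clst xs (Suc i))"
  have S: "S = {N \<in> fst (clst xs i). xs N i = None}" using ci z by (simp add: S_def clst_Suc)
  have allN: "xs N (Suc i) = None" if "N \<in> S" for N
  proof -
    have "xs N i = None" using that S by simp
    then show ?thesis using fs_mono[OF fs, of N i "Suc i"] by simp
  qed
  have "infinite {N \<in> S. xs N (Suc i) = clz xs (Suc i)}" using clz_inf[OF True] by (simp add: S_def)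
  then obtain N where "N \<in> S" "xs N (Suc i) = clz xs (Suc i)" by (metis (mono_tags, lifting) empty_Collect_eq finite.emptyI)
  then show ?thesis using allN by simp
qed

lemma finite_option_UNIV: "finite (UNIV::'a set) \<Longrightarrow> finite (UNIV::'a option set)"
  by (simp add: UNIV_option_conv)

lemma clz_fs:
  fixes xs :: "nat \<Rightarrow> 'a::countable seq"
  assumes fs: "\<And>N. xs N \<in> full_shift"
  shows "clz xs \<in> full_shift"
proof -
  have "finite (UNIV::'a set) \<Longrightarrow> clz xs i \<noteq> None" for i
  proof -
    assume fin: "finite (UNIV::'a set)"
    have allc: "cnd xs i" for i
    proof (induction i rule: less_induct)
      case (less i)
      have "\<not> snd (clst xs i)" using less.IH clst_alive[of xs i] by simp
      moreover have "\<exists>v. infinite {N \<in> fst (clst xs i). xs N i = v}"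
      proof (rule ccontr)
        assume "\<not> ?thesis"
        then have "\<forall>v \<in> UNIV. finite {N \<in> fst (clst xs i). xs N i = v}" by blast
        then have "finite (\<Union>v\<in>UNIV. {N \<in> fst (clst xs i). xs N i = v})"
          by (intro finite_UN_I[OF finite_option_UNIV[OF fin]]) simp
        moreover have "(\<Union>v\<in>UNIV. {N \<in> fst (clst xs i). xs N i = v}) = fst (clst xs i)" by blast
        ultimately show False using clst_inf[of xs i] by simp
      qed
      ultimately show ?case by (simp add: cnd_def)
    qed
    have "infinite {N \<in> fst (clst xs i). xs N i = clz xs i}" by (rule clz_inf[OF allc])
    then obtain N where "xs N i = clz xs i" by (metis (mono_tags, lifting) empty_Collect_eq finite.emptyI)
    moreover have "xs N i \<noteq> None" using fs[of N] fin by (simp add: fs_char)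
    ultimately show "clz xs i \<noteq> None" by simp
  qed
  then show ?thesis using clz_None[OF fs] by (auto simp: fs_char)
qed

definition clus :: "(nat \<Rightarrow> 'a::countable seq) \<Rightarrow> 'a seq \<Rightarrow> bool" where
  "clus xs z \<longleftrightarrow> (\<forall>w F K. finite F \<longrightarrow> z \<in> cyl w F \<longrightarrow> (\<exists>N\<ge>K. xs N \<in> cyl w F))"

lemma cluster:
  fixes xs :: "nat \<Rightarrow> 'a::countable seq"
  assumes fs: "\<And>N. xs N \<in> full_shift"
  shows "clus xs (clz xs)"
  unfolding clus_def
proof (intro allI impI)
  fix w F K assume fin: "finite (F::'a set)" and zc: "clz xs \<in> cyl w F"
  define k where "k = length w"
  have zk: "\<And>i. i < k \<Longrightarrow> clz xs i = Some (w!i)" "clz xs k \<notin> Some ` F"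
    using zc by (auto simp: cyl_def k_def)
  have ck: "\<And>i. i < k \<Longrightarrow> cnd xs i"
  proof -
    fix i assume "i < k"
    then have "clz xs i \<noteq> None" using zk by simp
    then show "cnd xs i" by (auto simp: clz_def split: if_splits)
  qed
  then have alive: "\<not> snd (clst xs k)" using clst_alive[of xs k] by simp
  show "\<exists>N\<ge>K. xs N \<in> cyl w F"
  proof (cases "cnd xs k")
    case True
    have "infinite (fst (clst xs (Suc k)))" by (rule clst_inf)
    then obtain N where N: "N \<in> fst (clst xs (Suc k))" "K \<le> N"
      unfolding infinite_nat_iff_unbounded_le by blast
    have ag: "\<And>i. i \<le> k \<Longrightarrow> xs N i = clz xs i"
    proof -
      fix i assume "i \<le> k"
      then have "cnd xs i" using ck True by (cases "i = k") auto
      then show "xs N i = clz xs i" using clst_agree[OF N(1)] \<open>i \<le> k\<close> by simp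
    qed
    have "xs N \<in> cyl w F" using fs[of N] ag zk by (auto simp: cyl_def k_def)
    then show ?thesis using N(2) by blast
  next
    case False
    define S where "S = fst (clst xs k)"
    have fv: "\<And>v. finite {N \<in> S. xs N k = v}" using False alive by (auto simp: cnd_def S_def)
    have "{N \<in> S. xs N k \<in> Some ` F} = (\<Union>f\<in>F. {N \<in> S. xs N k = Some f})" by blast
    then have "finite {N \<in> S. xs N k \<in> Some ` F}" using fin fv by simp
    moreover have "infinite S" unfolding S_def by (rule clst_inf)
    ultimately have "infinite (S - {N \<in> S. xs N k \<in> Some ` F})" by (rule Diff_infinite_finite)
    then obtain N where N: "N \<in> S - {N \<in> S. xs N k \<in> Some ` F}" "K \<le> N"
      unfolding infinite_nat_iff_unbounded_le by blast
    have ag: "\<And>i. i < k \<Longrightarrow> xs N i = clz xs i"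
      using clst_agree[of N xs k] N(1) ck by (auto simp: S_def)
    have "xs N \<in> cyl w F" using fs[of N] ag zk N(1) by (auto simp: cyl_def k_def)
    then show ?thesis using N(2) by blast
  qed
qed

lemma cluster_closed:
  assumes cl: "closedin shift_top L" and xs: "\<And>N. xs N \<in> L" and z: "z \<in> full_shift" and c: "clus xs z"
  shows "z \<in> L"
proof (rule ccontr)
  assume "z \<notin> L"
  have "openin shift_top (full_shift - L)" using cl by (simp add: closedin_def topspace_shift)
  from nbhd[OF this] z \<open>z \<notin> L\<close> obtain w F where "finite F" "z \<in> cyl w F" "cyl w F \<subseteq> full_shift - L" by blast
  with c obtain N where "xs N \<in> cyl w F" unfolding clus_def by blast
  then show False using xs[of N] \<open>cyl w F \<subseteq> full_shift - L\<close> by blast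
qed


lemma compact_union:
  fixes L :: "'a::countable seq set"
  assumes cl: "closedin shift_top L" and CL: "C \<subseteq> L"
    and oC: "openin (subtopology shift_top L) C" and oD: "openin (subtopology shift_top L) (L - C)"
  shows "\<exists>G. finite G \<and> G \<subseteq> {Z \<inter> L | Z. Z \<in> gen_cylinders} \<and> C = \<Union>G"
proof -
  have Lfs: "L \<subseteq> full_shift" using cl by (simp add: closedin_def topspace_shift)
  define P where "P = {p :: 'a list \<times> 'a set. finite (snd p) \<and> cyl (fst p) (snd p) \<inter> L \<subseteq> C}"
  have "countable ((UNIV :: 'a list set) \<times> Collect (finite :: 'a set \<Rightarrow> bool))"
    by (rule countable_SIGMA) (simp_all add: countable_Collect_finite)
  moreover have "P \<subseteq> (UNIV :: 'a list set) \<times> Collect (finite :: 'a set \<Rightarrow> bool)" by (auto simp: P_def)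
  ultimately have cP: "countable P" by (rule countable_subset[rotated])
  have cover: "\<exists>p\<in>P. z \<in> cyl (fst p) (snd p)" if "z \<in> C" for z
  proof -
    from sub_nbhd[OF oC that] obtain w F where "finite F" "z \<in> cyl w F" "cyl w F \<inter> L \<subseteq> C" by blast
    then show ?thesis by (intro bexI[of _ "(w, F)"]) (auto simp: P_def)
  qed
  show ?thesis
  proof (cases "P = {}")
    case True
    then have "C = {}" using cover by blast
    then show ?thesis by (intro exI[of _ "{}"]) simp
  next
    case False
    define e where "e = from_nat_into P"
    have eP: "e j \<in> P" for j unfolding e_def by (rule from_nat_into[OF False])
    have esurj: "\<exists>j. e j = p" if "p \<in> P" for p unfolding e_def using from_nat_into_surj[OF cP that] by blast
    have "\<exists>n. C \<subseteq> (\<Union>j\<le>n. cyl (fst (e j)) (snd (e j)))"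
    proof (rule ccontr)
      assume "\<not> ?thesis"
      then have "\<forall>n. \<exists>x. x \<in> C \<and> x \<notin> (\<Union>j\<le>n. cyl (fst (e j)) (snd (e j)))" by blast
      then obtain xs where xs: "\<And>n. xs n \<in> C" "\<And>n. xs n \<notin> (\<Union>j\<le>n. cyl (fst (e j)) (snd (e j)))"
        by metis
      have fs: "xs n \<in> full_shift" for n using xs(1) CL Lfs by blast
      define z where "z = clz xs"
      have cz: "clus xs z" unfolding z_def by (rule cluster[OF fs])
      have zfs: "z \<in> full_shift" unfolding z_def by (rule clz_fs[OF fs])
      have zL: "z \<in> L" by (rule cluster_closed[OF cl _ zfs cz]) (use xs(1) CL in blast)
      have "z \<in> C"
      proof (rule ccontr)
        assume "z \<notin> C"
        then have "z \<in> L - C" using zL by blast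
        from sub_nbhd[OF oD this] obtain w F where wF: "finite F" "z \<in> cyl w F" "cyl w F \<inter> L \<subseteq> L - C" by blast
        with cz obtain N where "xs N \<in> cyl w F" unfolding clus_def by blast
        then show False using xs(1)[of N] CL wF(3) by blast
      qed
      from cover[OF this] obtain p where p: "p \<in> P" "z \<in> cyl (fst p) (snd p)" by blast
      from esurj[OF p(1)] obtain j where j: "e j = p" by blast
      have "finite (snd p)" using p(1) by (simp add: P_def)
      with cz p(2) obtain N where N: "N \<ge> j" "xs N \<in> cyl (fst p) (snd p)" unfolding clus_def by blast
      then show False using xs(2)[of N] j by blast
    qed
    then obtain n where n: "C \<subseteq> (\<Union>j\<le>n. cyl (fst (e j)) (snd (e j)))" by blast
    define G where "G = (\<lambda>j. cyl (fst (e j)) (snd (e j)) \<inter> L) ` {..n}"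
    have "finite G" by (simp add: G_def)
    moreover have "G \<subseteq> {Z \<inter> L | Z. Z \<in> gen_cylinders}"
      using eP by (auto simp: G_def gen_cylinders_eq P_def)
    moreover have "C = \<Union>G"
    proof
      show "C \<subseteq> \<Union>G" using n CL by (auto simp: G_def)
      show "\<Union>G \<subseteq> C" using eP by (auto simp: G_def P_def)
    qed
    ultimately show ?thesis by blast
  qed
qed

lemma pullback:
  assumes x: "x \<in> full_shift" "\<forall>j<i. x j \<noteq> None" "(shift ^^ i) x \<in> cyl v G"
  shows "x \<in> cyl (map (the \<circ> x) [0..<i] @ v) G"
    "\<And>y. y \<in> cyl (map (the \<circ> x) [0..<i] @ v) G \<Longrightarrow> (shift ^^ i) y \<in> cyl v G"
proof -
  have xv: "\<forall>j<length v. x (i + j) = Some (v!j)" "x (i + length v) \<notin> Some ` G"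
    using x(3) by (auto simp: cyl_def shift_pow)
  show "x \<in> cyl (map (the \<circ> x) [0..<i] @ v) G"
    unfolding cyl_def
  proof (intro CollectI conjI allI impI)
    show "x \<in> full_shift" by (rule x(1))
    fix j assume "j < length (map (the \<circ> x) [0..<i] @ v)"
    then have j: "j < i + length v" by simp
    show "x j = Some ((map (the \<circ> x) [0..<i] @ v) ! j)"
    proof (cases "j < i")
      case True then show ?thesis using x(2) by (auto simp: nth_append)
    next
      case False
      have "j - i < length v" using j False by simp
      then have "x (i + (j - i)) = Some (v!(j - i))" using xv(1) by blast
      moreover have "i + (j - i) = j" using False by simp
      ultimately show ?thesis using False by (simp add: nth_append)
    qed
  next
    show "x (length (map (the \<circ> x) [0..<i] @ v)) \<notin> Some ` G" using xv(2) by simp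
  qed
  fix y assume y: "y \<in> cyl (map (the \<circ> x) [0..<i] @ v) G"
  then have yfs: "y \<in> full_shift" and
    yv: "\<And>j. j < i + length v \<Longrightarrow> y j = Some ((map (the \<circ> x) [0..<i] @ v) ! j)"
    and yG: "y (i + length v) \<notin> Some ` G" by (auto simp: cyl_def)
  show "(shift ^^ i) y \<in> cyl v G"
    unfolding cyl_def
  proof (intro CollectI conjI allI impI)
    show "(shift ^^ i) y \<in> full_shift" by (rule fs_shift_pow[OF yfs])
    fix j assume "j < length v"
    then show "(shift ^^ i) y j = Some (v ! j)" using yv[of "i + j"] by (simp add: shift_pow nth_append)
  next
    show "(shift ^^ i) y (length v) \<notin> Some ` G" using yG by (simp add: shift_pow)
  qed
qed

lemma nbhd_Inter:
  assumes "finite I" "x \<in> full_shift"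
    "\<And>i. i \<in> I \<Longrightarrow> \<exists>w F. finite F \<and> x \<in> cyl w F \<and> cyl w F \<inter> L \<subseteq> T i"
  shows "\<exists>w F. finite F \<and> x \<in> cyl w F \<and> cyl w F \<inter> L \<subseteq> (\<Inter>i\<in>I. T i)"
  using assms(1,3)
proof (induction I rule: finite_induct)
  case empty
  show ?case using assms(2) cyl_nil by (intro exI[of _ "[]"] exI[of _ "{}"]) auto
next
  case (insert a I)
  have "\<exists>w F. finite F \<and> x \<in> cyl w F \<and> cyl w F \<inter> L \<subseteq> (\<Inter>i\<in>I. T i)"
    using insert.IH insert.prems by blast
  then obtain w F where 1: "finite F" "x \<in> cyl w F" "cyl w F \<inter> L \<subseteq> (\<Inter>i\<in>I. T i)" by blast
  obtain v G where 2: "finite G" "x \<in> cyl v G" "cyl v G \<inter> L \<subseteq> T a" using insert.prems by blast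
  from cyl_Int[OF 1(2) 2(2) 1(1) 2(1)] obtain q H where
    "finite H" "x \<in> cyl q H" "cyl q H \<subseteq> cyl w F \<inter> cyl v G" by blast
  then show ?case using 1(3) 2(3) by (intro exI[of _ q] exI[of _ H]) blast
qed

lemma letters_mem: "x \<in> L \<Longrightarrow> x i = Some a \<Longrightarrow> a \<in> letters L"
  unfolding letters_def blocks_def by (auto intro!: bexI[of _ x] exI[of _ i])

lemma O_char: "x \<in> full_shift \<Longrightarrow> x 0 = None \<Longrightarrow> x = empty_seq"
  unfolding empty_seq_def using fs_mono[of x 0] by auto

lemma Union_gen: "\<Union>gen_cylinders = full_shift"
  using topspace_shift unfolding shift_top_def topology_generated_by_topspace by simp


lemma forward:
  fixes Lam :: "'a::countable seq set" and Gam :: "'b::countable seq set"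
    and Phi :: "'a seq \<Rightarrow> 'b seq" and d :: 'b
  assumes SL: "shift_space Lam" and SG: "shift_space Gam"
    and PG: "Phi ` Lam \<subseteq> Gam"
    and PO: "Phi empty_seq = (\<lambda>_. Some d)"
    and fdO: "empty_seq \<in> Gam \<Longrightarrow> finitely_defined Lam {x \<in> Lam. Phi x = empty_seq}"
    and cont: "continuous_map (subtopology shift_top Lam) (subtopology shift_top Gam) Phi"
    and comm: "\<forall>x\<in>Lam. Phi (shift x) = shift (Phi x)"
  shows "\<exists>C :: 'b option \<Rightarrow> 'a seq set.
            sliding_block_code Lam C Phi \<and>
            C None = {x \<in> Lam. Phi x = empty_seq} \<and>
            (\<forall>a. a \<notin> letters Gam \<longrightarrow> C (Some a) = {}) \<and>
            (\<forall>a \<in> letters Gam. \<exists>G. finite G \<and>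
                 G \<subseteq> {Z \<inter> Lam | Z. Z \<in> gen_cylinders} \<and> C (Some a) = \<Union>G) \<and>
            finite {a \<in> letters Gam. C (Some a) \<noteq> {}} \<and>
            (\<forall>M::nat. M \<ge> 1 \<longrightarrow> (\<exists>F. finite F \<and> F \<subseteq> letters Lam \<and>
                 (\<forall>n. 1 \<le> n \<and> n \<le> M \<longrightarrow>
                    (shift ^^ (n - 1)) ` (gen_cyl empty_seq F \<inter> Lam) \<subseteq> C (Some d))))"
proof -
  have Lfs: "Lam \<subseteq> full_shift" using SL by (simp add: shift_space_def)
  have Lcl: "closedin shift_top Lam" using SL by (simp add: shift_space_def)
  have Lsh: "shift ` Lam \<subseteq> Lam" using SL by (simp add: shift_space_def)
  have LO: "empty_seq \<in> Lam \<longleftrightarrow> infinite (letters Lam)" using SL by (simp add: shift_space_def)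
  have Gfs: "Gam \<subseteq> full_shift" using SG by (simp add: shift_space_def)
  have Lsh1: "shift x \<in> Lam" if "x \<in> Lam" for x using Lsh that by blast
  have Lpow: "(shift ^^ n) x \<in> Lam" if "x \<in> Lam" for x n
    using that by (induction n) (auto intro: Lsh1)
  have PhiG: "Phi x \<in> full_shift" if "x \<in> Lam" for x using PG Gfs that by blast
  have com_pow: "Phi ((shift ^^ n) x) = (shift ^^ n) (Phi x)" if "x \<in> Lam" for x n
  proof (induction n)
    case 0 then show ?case by simp
  next
    case (Suc n)
    have "Phi ((shift ^^ Suc n) x) = Phi (shift ((shift ^^ n) x))" by simp
    also have "\<dots> = shift (Phi ((shift ^^ n) x))" using comm Lpow[OF that] by blast
    also have "\<dots> = (shift ^^ Suc n) (Phi x)" using Suc by simp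
    finally show ?case .
  qed
  have PhiN: "Phi ((shift ^^ n) x) 0 = Phi x n" if "x \<in> Lam" for x n
    using com_pow[OF that] by (simp add: shift_pow)
  define C where "C = (\<lambda>a. {x \<in> Lam. Phi x 0 = a})"
  have CN: "C None = {x \<in> Lam. Phi x = empty_seq}"
  proof
    show "C None \<subseteq> {x \<in> Lam. Phi x = empty_seq}" using O_char PhiG by (auto simp: C_def)
    show "{x \<in> Lam. Phi x = empty_seq} \<subseteq> C None" by (auto simp: C_def empty_seq_def)
  qed
  have top_sub: "topspace (subtopology shift_top Lam) = Lam" using Lfs by (auto simp: topspace_shift)
  have pre_open: "openin (subtopology shift_top Lam) {x \<in> Lam. Phi x \<in> V}" if "openin shift_top V" for V
  proof -
    have "openin (subtopology shift_top Gam) (Gam \<inter> V)" by (rule openin_subtopology_Int2[OF that])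
    then have "openin (subtopology shift_top Lam) {x \<in> topspace (subtopology shift_top Lam). Phi x \<in> Gam \<inter> V}"
      using cont unfolding continuous_map_def by blast
    moreover have "{x \<in> topspace (subtopology shift_top Lam). Phi x \<in> Gam \<inter> V} = {x \<in> Lam. Phi x \<in> V}"
      unfolding top_sub using PG by blast
    ultimately show ?thesis by simp
  qed
  have oC: "openin (subtopology shift_top Lam) (C (Some b))" for b
  proof -
    have "C (Some b) = {x \<in> Lam. Phi x \<in> cyl [b] {}}" using PhiG by (auto simp: C_def cyl_def)
    then show ?thesis using pre_open[OF cyl_open[of "{}" "[b]"]] by simp
  qed
  have oD: "openin (subtopology shift_top Lam) (Lam - C (Some b))" for b
  proof -
    have "Lam - C (Some b) = {x \<in> Lam. Phi x \<in> full_shift - cyl [b] {}}" using PhiG by (auto simp: C_def cyl_def)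
    then show ?thesis using pre_open[OF open_compl[of "{}" "[b]"]] by simp
  qed
  have fu: "\<exists>G. finite G \<and> G \<subseteq> {Z \<inter> Lam | Z. Z \<in> gen_cylinders} \<and> C (Some b) = \<Union>G" for b
    by (rule compact_union[OF Lcl _ oC oD]) (auto simp: C_def)
  have Cfd: "finitely_defined Lam (C a)" for a
  proof (cases a)
    case None
    show ?thesis
    proof (cases "empty_seq \<in> Gam")
      case True then show ?thesis using fdO CN None by simp
    next
      case False
      have "C a = {}"
      proof (rule ccontr)
        assume "C a \<noteq> {}"
        then obtain x where "x \<in> Lam" "Phi x = empty_seq" using None CN by auto
        then have "Phi x \<in> Gam" "Phi x = empty_seq" using PG by auto
        then show False using False by simp
      qed
      then show ?thesis using fd_of_pdet[OF Lfs empty_subsetI pdet_empty, of 1] by simp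
    qed
  next
    case (Some b)
    obtain G where G0: "finite G \<and> G \<subseteq> {Z \<inter> Lam | Z. Z \<in> gen_cylinders} \<and> C (Some b) = \<Union>G"
      using fu[of b] by (rule exE)
    note G = conjunct1[OF G0] conjunct1[OF conjunct2[OF G0]] conjunct2[OF conjunct2[OF G0]]
    obtain N where N: "0 < N" "pdet Lam (\<Union>G) N" using pdet_finite_union[OF Lfs G(1) G(2)] by blast
    have "C (Some b) \<subseteq> Lam" by (auto simp: C_def)
    then show ?thesis using fd_of_pdet[OF Lfs _ _ N(1), of "C (Some b)"] N(2) G(3) Some by simp
  qed
  have memC: "(shift ^^ n) x \<in> C a \<longleftrightarrow> Phi x n = a" if "x \<in> Lam" for x n a
    using that by (simp add: C_def Lpow PhiN)
  have sbc: "sliding_block_code Lam C Phi"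
    unfolding sliding_block_code_def
  proof (intro conjI)
    show "\<forall>a b. a \<noteq> b \<longrightarrow> C a \<inter> C b = {}" by (auto simp: C_def)
    show "(\<Union>a. C a) = Lam" by (auto simp: C_def)
    show "\<forall>a. finitely_defined Lam (C a)" using Cfd by blast
    show "shift ` C None \<subseteq> C None"
    proof (rule image_subsetI)
      fix x assume "x \<in> C None"
      then have x: "x \<in> Lam" "Phi x = empty_seq" using CN by auto
      then have "Phi (shift x) = shift empty_seq" using comm by simp
      also have "\<dots> = empty_seq" by (simp add: shift_def empty_seq_def)
      finally show "shift x \<in> C None" using CN Lsh1[OF x(1)] by simp
    qed
    show "\<forall>x\<in>Lam. \<forall>n. Phi x n = (THE a. (shift ^^ n) x \<in> C a)"
    proof (intro ballI allI)
      fix x n assume x: "x \<in> Lam"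
      show "Phi x n = (THE a. (shift ^^ n) x \<in> C a)"
        by (rule the_equality[symmetric]) (simp_all add: memC[OF x])
    qed
  qed
  have Cemp: "\<forall>a. a \<notin> letters Gam \<longrightarrow> C (Some a) = {}"
  proof (intro allI impI)
    fix a assume a: "a \<notin> letters Gam"
    show "C (Some a) = {}"
    proof (rule ccontr)
      assume "C (Some a) \<noteq> {}"
      then obtain x where "x \<in> Lam" "Phi x 0 = Some a" by (auto simp: C_def)
      moreover have "Phi x \<in> Gam" using PG \<open>x \<in> Lam\<close> by blast
      ultimately have "a \<in> letters Gam" using letters_mem[of "Phi x" Gam 0 a] by simp
      then show False using a by simp
    qed
  qed
  have fin1: "finite {a \<in> letters Gam. C (Some a) \<noteq> {}}"
  proof (rule ccontr)
    assume inf: "infinite {a \<in> letters Gam. C (Some a) \<noteq> {}}"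
    obtain f :: "nat \<Rightarrow> 'b" where f: "inj f" "range f \<subseteq> {a \<in> letters Gam. C (Some a) \<noteq> {}}"
      using infinite_countable_subset[OF inf] by blast
    define xs where "xs N = (SOME x. x \<in> C (Some (f N)))" for N
    have xsC: "xs N \<in> C (Some (f N))" for N
    proof -
      have "C (Some (f N)) \<noteq> {}" using f(2) by blast
      then show ?thesis unfolding xs_def by (simp add: some_in_eq)
    qed
    then have xsL: "xs N \<in> Lam" and xs0: "Phi (xs N) 0 = Some (f N)" for N by (simp_all add: C_def)
    have fs: "xs N \<in> full_shift" for N using xsL Lfs by blast
    define z where "z = clz xs"
    have cz: "clus xs z" unfolding z_def by (rule cluster[OF fs])
    have zfs: "z \<in> full_shift" unfolding z_def by (rule clz_fs[OF fs])
    have zL: "z \<in> Lam" by (rule cluster_closed[OF Lcl xsL zfs cz])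
    show False
    proof (cases "Phi z 0")
      case (Some b)
      then have "z \<in> C (Some b)" using zL by (simp add: C_def)
      from sub_nbhd[OF oC this] obtain w F where wF: "finite F" "z \<in> cyl w F" "cyl w F \<inter> Lam \<subseteq> C (Some b)"
        by blast
      from cz wF obtain N1 where N1: "xs N1 \<in> cyl w F" unfolding clus_def by blast
      from cz wF obtain N2 where N2: "N2 \<ge> Suc N1" "xs N2 \<in> cyl w F" unfolding clus_def by blast
      have "xs N1 \<in> C (Some b)" "xs N2 \<in> C (Some b)" using N1 N2(2) xsL wF(3) by blast+
      then have "f N1 = b" "f N2 = b" using xs0 by (simp_all add: C_def)
      then have "N1 = N2" by (intro injD[OF f(1)]) simp
      then show False using N2(1) by simp
    next
      case None
      then have Pz: "Phi z = empty_seq" using O_char PhiG zL by blast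
      have "Phi z \<in> Gam" using PG zL by blast
      then have OG: "empty_seq \<in> Gam" using Pz by simp
      have zinf: "z i \<noteq> None" for i
      proof
        assume zi: "z i = None"
        have "(shift ^^ i) z = empty_seq"
        proof
          fix j show "(shift ^^ i) z j = empty_seq j"
            using fs_mono[OF zfs zi, of "i + j"] by (simp add: shift_pow empty_seq_def)
        qed
        then have e1: "Phi ((shift ^^ i) z) = (\<lambda>_. Some d)" using PO by simp
        have e2: "Phi ((shift ^^ i) z) = (shift ^^ i) empty_seq" using com_pow[OF zL] Pz by simp
        have e3: "(shift ^^ i) empty_seq = (empty_seq :: 'b seq)" by (rule ext) (simp add: shift_pow empty_seq_def)
        have "(\<lambda>_. Some d) = (empty_seq :: 'b seq)" using e1 e2 e3 by simp
        then have "Some d = None" unfolding empty_seq_def by (metis)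
        then show False by simp
      qed
      from fdO[OF OG] obtain I :: "nat set" and l :: "nat \<Rightarrow> nat" and b :: "nat \<Rightarrow> 'a option list" where
        Ieq: "{x \<in> Lam. Phi x = empty_seq} = {x \<in> Lam. \<exists>i\<in>I. prefix_word x (1 + l i) = b i}"
        unfolding finitely_defined_def by blast
      have "z \<in> {x \<in> Lam. \<exists>i\<in>I. prefix_word x (1 + l i) = b i}" using Ieq zL Pz by blast
      then obtain i where i: "i \<in> I" "prefix_word z (1 + l i) = b i" by blast
      define M where "M = 1 + l i"
      define w where "w = map (the \<circ> z) [0..<M]"
      have "z \<in> cyl w {}" using zfs zinf by (auto simp: cyl_def w_def)
      then obtain N where N: "xs N \<in> cyl w {}" using cz unfolding clus_def by blast
      have "\<forall>j<M. xs N j = z j" using N zinf by (auto simp: cyl_def w_def)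
      then have "prefix_word (xs N) M = prefix_word z M" by (simp add: prefix_eq)
      then have "xs N \<in> {x \<in> Lam. Phi x = empty_seq}" using Ieq i xsL M_def by auto
      then show False using xs0[of N] by (simp add: empty_seq_def)
    qed
  qed
  have gO: "gen_cyl empty_seq F = cyl [] F" for F using gen_cyl_seqof[of "[]" F] by (simp add: seqof_empty)
  have cond2: "\<forall>M::nat. M \<ge> 1 \<longrightarrow> (\<exists>F. finite F \<and> F \<subseteq> letters Lam \<and>
                 (\<forall>n. 1 \<le> n \<and> n \<le> M \<longrightarrow>
                    (shift ^^ (n - 1)) ` (gen_cyl empty_seq F \<inter> Lam) \<subseteq> C (Some d)))"
  proof (intro allI impI)
    fix M :: nat assume "M \<ge> 1"
    show "\<exists>F. finite F \<and> F \<subseteq> letters Lam \<and>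
                 (\<forall>n. 1 \<le> n \<and> n \<le> M \<longrightarrow>
                    (shift ^^ (n - 1)) ` (gen_cyl empty_seq F \<inter> Lam) \<subseteq> C (Some d))"
    proof (cases "empty_seq \<in> Lam")
      case True
      define V where "V = cyl (replicate M d) {}"
      have U: "openin (subtopology shift_top Lam) {x \<in> Lam. Phi x \<in> V}"
        unfolding V_def by (rule pre_open[OF cyl_open]) simp
      have "Phi empty_seq \<in> full_shift" using PhiG True by blast
      then have "empty_seq \<in> {x \<in> Lam. Phi x \<in> V}" using True PO by (auto simp: V_def cyl_def)
      from sub_nbhd[OF U this] obtain w F where wF: "finite F" "empty_seq \<in> cyl w F"
        "cyl w F \<inter> Lam \<subseteq> {x \<in> Lam. Phi x \<in> V}" by blast
      have w: "w = []" using wF(2) by (cases w) (auto simp: cyl_def empty_seq_def)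
      define F' where "F' = F \<inter> letters Lam"
      show ?thesis
      proof (intro exI[of _ F'] conjI allI impI)
        show "finite F'" using wF(1) by (simp add: F'_def)
        show "F' \<subseteq> letters Lam" by (simp add: F'_def)
        fix n assume n: "1 \<le> n \<and> n \<le> M"
        show "(shift ^^ (n - 1)) ` (gen_cyl empty_seq F' \<inter> Lam) \<subseteq> C (Some d)"
        proof (rule image_subsetI)
          fix x assume x: "x \<in> gen_cyl empty_seq F' \<inter> Lam"
          then have xL: "x \<in> Lam" and xc: "x \<in> cyl [] F'" using gO by auto
          have "x 0 \<notin> Some ` F"
          proof
            assume "x 0 \<in> Some ` F"
            then obtain a where "x 0 = Some a" "a \<in> F" by blast
            moreover then have "a \<in> letters Lam" using letters_mem[OF xL] by blast
            ultimately show False using xc by (auto simp: cyl_def F'_def)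
          qed
          then have "x \<in> cyl [] F" using xc by (auto simp: cyl_def)
          then have "Phi x \<in> V" using wF(3) w xL by blast
          then have "Phi x (n - 1) = Some d" using n by (auto simp: V_def cyl_def)
          then show "(shift ^^ (n - 1)) x \<in> C (Some d)" using memC[OF xL] by simp
        qed
      qed
    next
      case False
      then have finL: "finite (letters Lam)" using LO by simp
      have "gen_cyl empty_seq (letters Lam) \<inter> Lam = {}"
      proof (rule ccontr)
        assume "gen_cyl empty_seq (letters Lam) \<inter> Lam \<noteq> {}"
        then obtain x where x: "x \<in> Lam" "x 0 \<notin> Some ` letters Lam" using gO by (auto simp: cyl_def)
        show False
        proof (cases "x 0")
          case None then have "x = empty_seq" using O_char Lfs x(1) by blast
          then show False using x(1) False by simp
        next
          case (Some a) then show False using x letters_mem[OF x(1), of 0 a] by blast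
        qed
      qed
      then show ?thesis using finL by (intro exI[of _ "letters Lam"]) auto
    qed
  qed
  show ?thesis
  proof (intro exI[of _ C] conjI)
    show "sliding_block_code Lam C Phi" by (rule sbc)
    show "C None = {x \<in> Lam. Phi x = empty_seq}" by (rule CN)
    show "\<forall>a. a \<notin> letters Gam \<longrightarrow> C (Some a) = {}" by (rule Cemp)
    show "\<forall>a\<in>letters Gam. \<exists>G. finite G \<and> G \<subseteq> {Z \<inter> Lam | Z. Z \<in> gen_cylinders} \<and> C (Some a) = \<Union>G"
      by (intro ballI fu)
    show "finite {a \<in> letters Gam. C (Some a) \<noteq> {}}" by (rule fin1)
  qed (rule cond2)
qed


lemma gen_memb: "g \<in> {Z \<inter> L | Z. Z \<in> gen_cylinders} \<Longrightarrow> \<exists>w F. g = cyl w F \<inter> L \<and> finite F"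
  by (auto simp: gen_cylinders_eq)

lemma backward:
  fixes Lam :: "'a::countable seq set" and Gam :: "'b::countable seq set"
    and Phi :: "'a seq \<Rightarrow> 'b seq" and d :: 'b and C :: "'b option \<Rightarrow> 'a seq set"
  assumes SL: "shift_space Lam" and SG: "shift_space Gam"
    and PG: "Phi ` Lam \<subseteq> Gam"
    and sbc: "sliding_block_code Lam C Phi"
    and Cemp: "\<forall>a. a \<notin> letters Gam \<longrightarrow> C (Some a) = {}"
    and fu: "\<forall>a \<in> letters Gam. \<exists>G. finite G \<and> G \<subseteq> {Z \<inter> Lam | Z. Z \<in> gen_cylinders} \<and> C (Some a) = \<Union>G"
    and c2: "\<forall>M::nat. M \<ge> 1 \<longrightarrow> (\<exists>F. finite F \<and> F \<subseteq> letters Lam \<and>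
                 (\<forall>n. 1 \<le> n \<and> n \<le> M \<longrightarrow>
                    (shift ^^ (n - 1)) ` (gen_cyl empty_seq F \<inter> Lam) \<subseteq> C (Some d)))"
  shows "continuous_map (subtopology shift_top Lam) (subtopology shift_top Gam) Phi \<and>
          (\<forall>x\<in>Lam. Phi (shift x) = shift (Phi x))"
proof -
  have Lfs: "Lam \<subseteq> full_shift" using SL by (simp add: shift_space_def)
  have Lsh: "shift ` Lam \<subseteq> Lam" using SL by (simp add: shift_space_def)
  have Gfs: "Gam \<subseteq> full_shift" using SG by (simp add: shift_space_def)
  have Lsh1: "shift x \<in> Lam" if "x \<in> Lam" for x using Lsh that by blast
  have Lpow: "(shift ^^ n) x \<in> Lam" if "x \<in> Lam" for x n
    using that by (induction n) (auto intro: Lsh1)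
  have PhiG: "Phi x \<in> full_shift" if "x \<in> Lam" for x using PG Gfs that by blast
  note sb = sbc[unfolded sliding_block_code_def]
  have disj: "C a \<inter> C b = {}" if "a \<noteq> b" for a b using conjunct1[OF sb] that by simp
  have cov: "(\<Union>a. C a) = Lam" using conjunct1[OF conjunct2[OF sb]] by simp
  have PhiT: "Phi x n = (THE a. (shift ^^ n) x \<in> C a)" if "x \<in> Lam" for x n
    using conjunct2[OF conjunct2[OF conjunct2[OF conjunct2[OF sb]]]] that by simp
  have memC: "(shift ^^ n) x \<in> C a \<longleftrightarrow> Phi x n = a" if x: "x \<in> Lam" for x n a
  proof -
    have "(shift ^^ n) x \<in> (\<Union>a. C a)" using cov Lpow[OF x] by simp
    then obtain a' where a': "(shift ^^ n) x \<in> C a'" by blast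
    have uniq: "b = a'" if "(shift ^^ n) x \<in> C b" for b
    proof (rule ccontr)
      assume "b \<noteq> a'"
      then show False using disj[of b a'] that a' by blast
    qed
    have "(THE a. (shift ^^ n) x \<in> C a) = a'" by (rule the_equality[where a=a']) (rule a', rule uniq)
    then have "Phi x n = a'" using PhiT[OF x] by simp
    then show ?thesis using a' uniq by blast
  qed
  have comm: "\<forall>x\<in>Lam. Phi (shift x) = shift (Phi x)"
  proof
    fix x assume x: "x \<in> Lam"
    show "Phi (shift x) = shift (Phi x)"
    proof
      fix n
      have 1: "(shift ^^ Suc n) x \<in> C (Phi x (Suc n))" by (subst memC[OF x]) (rule refl)
      have 2: "(shift ^^ Suc n) x = (shift ^^ n) (shift x)" by (simp add: funpow_swap1)
      have 3: "(shift ^^ n) (shift x) \<in> C (Phi x (Suc n))" using 1 2 by metis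
      have "Phi (shift x) n = Phi x (Suc n)" using memC[OF Lsh1[OF x], of n "Phi x (Suc n)"] 3 by blast
      then show "Phi (shift x) n = shift (Phi x) n" by (simp add: shift_def)
    qed
  qed
  have top_sub: "topspace (subtopology shift_top Lam) = Lam" using Lfs by (auto simp: topspace_shift)
  have oC: "openin (subtopology shift_top Lam) (C (Some a))" for a
  proof (cases "a \<in> letters Gam")
    case True
    obtain G where G0: "finite G \<and> G \<subseteq> {Z \<inter> Lam | Z. Z \<in> gen_cylinders} \<and> C (Some a) = \<Union>G"
      using bspec[OF fu True] by (rule exE)
    have "openin (subtopology shift_top Lam) g" if "g \<in> G" for g
    proof -
      have "g \<in> {Z \<inter> Lam | Z. Z \<in> gen_cylinders}" using conjunct1[OF conjunct2[OF G0]] that by (rule subsetD)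
      then obtain w F where "g = cyl w F \<inter> Lam" "finite F" using gen_memb by blast
      then show ?thesis using openin_subtopology_Int[OF cyl_open] by simp
    qed
    then have "openin (subtopology shift_top Lam) (\<Union>G)" by (rule openin_Union)
    then show ?thesis using G0 by simp
  next
    case False then show ?thesis using Cemp by simp
  qed
  have oDG: "openin (subtopology shift_top Lam) (Lam - \<Union>G)"
    if "finite G" "G \<subseteq> {Z \<inter> Lam | Z. Z \<in> gen_cylinders}" for G
    using that
  proof (induction G rule: finite_induct)
    case empty
    show ?case using openin_topspace[of "subtopology shift_top Lam"] top_sub by simp
  next
    case (insert g G)
    have "g \<in> {Z \<inter> Lam | Z. Z \<in> gen_cylinders}" using insert.prems by (rule subsetD) simp
    then obtain w F where g: "g = cyl w F \<inter> Lam" "finite F" using gen_memb by blast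
    have "Lam - g = Lam \<inter> (full_shift - cyl w F)" using g(1) Lfs by blast
    then have "openin (subtopology shift_top Lam) (Lam - g)"
      using openin_subtopology_Int2[OF open_compl[OF g(2)]] by simp
    moreover have "openin (subtopology shift_top Lam) (Lam - \<Union>G)" using insert.IH insert.prems by simp
    moreover have "Lam - \<Union>(insert g G) = (Lam - g) \<inter> (Lam - \<Union>G)" by blast
    ultimately show ?case by (simp add: openin_Int)
  qed
  have oD: "openin (subtopology shift_top Lam) (Lam - C (Some a))" for a
  proof (cases "a \<in> letters Gam")
    case True
    obtain G where G0: "finite G \<and> G \<subseteq> {Z \<inter> Lam | Z. Z \<in> gen_cylinders} \<and> C (Some a) = \<Union>G"
      using bspec[OF fu True] by (rule exE)
    then show ?thesis using oDG[of G] by simp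
  next
    case False then show ?thesis using Cemp openin_topspace[of "subtopology shift_top Lam"] top_sub by simp
  qed
  have oH: "openin (subtopology shift_top Lam) (Lam - (\<Union>h\<in>H. C (Some h)))" if "finite H" for H
    using that
  proof (induction H rule: finite_induct)
    case empty
    show ?case using openin_topspace[of "subtopology shift_top Lam"] top_sub by simp
  next
    case (insert h H)
    have "Lam - (\<Union>h\<in>insert h H. C (Some h)) = (Lam - C (Some h)) \<inter> (Lam - (\<Union>h\<in>H. C (Some h)))" by blast
    then show ?case using oD[of h] insert.IH by (simp add: openin_Int)
  qed
  have Tpull: "\<exists>w F. finite F \<and> x \<in> cyl w F \<and> cyl w F \<inter> Lam \<subseteq> {y \<in> Lam. (shift ^^ i) y \<in> S}"
    if S: "openin (subtopology shift_top Lam) S" and x: "x \<in> Lam" "(shift ^^ i) x \<in> S" "\<forall>j<i. x j \<noteq> None"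
    for S x i
  proof -
    from sub_nbhd[OF S x(2)] obtain v G where vG: "finite G" "(shift ^^ i) x \<in> cyl v G" "cyl v G \<inter> Lam \<subseteq> S"
      by blast
    have xfs: "x \<in> full_shift" using x(1) Lfs by blast
    note pb = pullback[OF xfs x(3) vG(2)]
    have "cyl (map (the \<circ> x) [0..<i] @ v) G \<inter> Lam \<subseteq> {y \<in> Lam. (shift ^^ i) y \<in> S}"
    proof
      fix y assume y: "y \<in> cyl (map (the \<circ> x) [0..<i] @ v) G \<inter> Lam"
      then have "(shift ^^ i) y \<in> cyl v G" "(shift ^^ i) y \<in> Lam" using pb(2) Lpow by auto
      then show "y \<in> {y \<in> Lam. (shift ^^ i) y \<in> S}" using vG(3) y by blast
    qed
    then show ?thesis using vG(1) pb(1) by blast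
  qed
  have gO: "gen_cyl empty_seq F = cyl [] F" for F using gen_cyl_seqof[of "[]" F] by (simp add: seqof_empty)
  have main: "\<exists>q G. finite G \<and> x \<in> cyl q G \<and> cyl q G \<inter> Lam \<subseteq> Phi -` cyl w H \<inter> Lam"
    if H: "finite H" and x: "x \<in> Phi -` cyl w H \<inter> Lam" for w H x
  proof -
    have xL: "x \<in> Lam" using x by simp
    have xfs: "x \<in> full_shift" using xL Lfs by blast
    define k where "k = length w"
    have xw: "\<And>i. i < k \<Longrightarrow> Phi x i = Some (w!i)" "Phi x k \<notin> Some ` H"
      using x by (auto simp: cyl_def k_def)
    define T where "T i = (if i < k then {y \<in> Lam. Phi y i = Phi x i} else {y \<in> Lam. Phi y k \<notin> Some ` H})" for i
    have goodT: "\<exists>q G. finite G \<and> x \<in> cyl q G \<and> cyl q G \<inter> Lam \<subseteq> T i"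
      if i: "i \<le> k" "\<forall>j<i. x j \<noteq> None" for i
    proof (cases "i < k")
      case True
      have S: "openin (subtopology shift_top Lam) (C (Phi x i))" using oC xw(1)[OF True] by simp
      have "(shift ^^ i) x \<in> C (Phi x i)" using memC[OF xL] by simp
      from Tpull[OF S xL this i(2)] obtain q G where qG: "finite G" "x \<in> cyl q G"
        "cyl q G \<inter> Lam \<subseteq> {y \<in> Lam. (shift ^^ i) y \<in> C (Phi x i)}" by blast
      have "{y \<in> Lam. (shift ^^ i) y \<in> C (Phi x i)} \<subseteq> T i" using memC True by (auto simp: T_def)
      then show ?thesis using qG by blast
    next
      case False
      then have ik: "i = k" using i(1) by simp
      define S where "S = Lam - (\<Union>h\<in>H. C (Some h))"
      have So: "openin (subtopology shift_top Lam) S" unfolding S_def by (rule oH[OF H])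
      have "(shift ^^ i) x \<in> S"
      proof -
        have "(shift ^^ k) x \<notin> C (Some h)" if "h \<in> H" for h
          using memC[OF xL, of k "Some h"] xw(2) that by auto
        then show ?thesis using Lpow[OF xL] ik by (auto simp: S_def)
      qed
      from Tpull[OF So xL this i(2)] obtain q G where qG: "finite G" "x \<in> cyl q G"
        "cyl q G \<inter> Lam \<subseteq> {y \<in> Lam. (shift ^^ i) y \<in> S}" by blast
      have "{y \<in> Lam. (shift ^^ i) y \<in> S} \<subseteq> T i"
      proof
        fix y assume y: "y \<in> {y \<in> Lam. (shift ^^ i) y \<in> S}"
        then have yL: "y \<in> Lam" by simp
        have "Phi y k \<noteq> Some h" if "h \<in> H" for h
          using y that memC[OF yL, of k "Some h"] ik by (auto simp: S_def)
        then show "y \<in> T i" using yL ik by (auto simp: T_def)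
      qed
      then show ?thesis using qG by blast
    qed
    have concl: "y \<in> Phi -` cyl w H \<inter> Lam" if y: "y \<in> Lam" "\<And>i. i \<le> k \<Longrightarrow> y \<in> T i" for y
    proof -
      have "\<And>i. i < k \<Longrightarrow> Phi y i = Some (w!i)"
      proof -
        fix i assume "i < k"
        then have "y \<in> T i" using y(2)[of i] by simp
        then show "Phi y i = Some (w!i)" using xw(1)[OF \<open>i < k\<close>] \<open>i < k\<close> by (simp add: T_def)
      qed
      moreover have "Phi y k \<notin> Some ` H" using y(2)[of k] by (simp add: T_def)
      ultimately show ?thesis using PhiG[OF y(1)] y(1) by (auto simp: cyl_def k_def)
    qed
    show ?thesis
    proof (cases "\<forall>j<k. x j \<noteq> None")
      case True
      have "\<exists>q G. finite G \<and> x \<in> cyl q G \<and> cyl q G \<inter> Lam \<subseteq> (\<Inter>i\<in>{..k}. T i)"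
      proof (rule nbhd_Inter[OF _ xfs])
        fix i assume "i \<in> {..k}"
        then show "\<exists>q G. finite G \<and> x \<in> cyl q G \<and> cyl q G \<inter> Lam \<subseteq> T i"
          using goodT True by simp
      qed simp
      then obtain q G where qG: "finite G" "x \<in> cyl q G" "cyl q G \<inter> Lam \<subseteq> (\<Inter>i\<in>{..k}. T i)" by blast
      have "cyl q G \<inter> Lam \<subseteq> Phi -` cyl w H \<inter> Lam"
      proof
        fix y assume "y \<in> cyl q G \<inter> Lam"
        then show "y \<in> Phi -` cyl w H \<inter> Lam" using qG(3) by (intro concl) auto
      qed
      then show ?thesis using qG(1,2) by blast
    next
      case False
      then obtain j0 where j0: "j0 < k" "x j0 = None" by blast
      define m where "m = (LEAST j. x j = None)"
      have xm: "x m = None" unfolding m_def by (rule LeastI[of _ j0]) (rule j0(2))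
      have xlm: "\<forall>j<m. x j \<noteq> None" unfolding m_def using not_less_Least by blast
      have "m \<le> j0" unfolding m_def by (rule Least_le) (rule j0(2))
      then have mk: "m < k" using j0(1) by simp
      have ex: "\<exists>F. finite F \<and> F \<subseteq> letters Lam \<and> (\<forall>n. 1 \<le> n \<and> n \<le> Suc k \<longrightarrow>
                    (shift ^^ (n - 1)) ` (gen_cyl empty_seq F \<inter> Lam) \<subseteq> C (Some d))"
        by (rule c2[rule_format]) simp
      obtain F where F0: "finite F \<and> F \<subseteq> letters Lam \<and> (\<forall>n. 1 \<le> n \<and> n \<le> Suc k \<longrightarrow>
                    (shift ^^ (n - 1)) ` (gen_cyl empty_seq F \<inter> Lam) \<subseteq> C (Some d))"
        using ex by (rule exE)
      have F2: "\<forall>n. 1 \<le> n \<and> n \<le> Suc k \<longrightarrow>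
                    (shift ^^ (n - 1)) ` (gen_cyl empty_seq F \<inter> Lam) \<subseteq> C (Some d)"
        using F0 by simp
      have Ffin: "finite F" using F0 by simp
      have Fsh: "(shift ^^ j) y \<in> C (Some d)" if "j \<le> k" "y \<in> cyl [] F \<inter> Lam" for j y
      proof -
        have "1 \<le> Suc j \<and> Suc j \<le> Suc k" using that(1) by simp
        then have "(shift ^^ (Suc j - 1)) ` (gen_cyl empty_seq F \<inter> Lam) \<subseteq> C (Some d)" by (rule F2[rule_format])
        then show ?thesis using that(2) gO by auto
      qed
      have "(shift ^^ m) x \<in> cyl [] F"
        using fs_shift_pow[OF xfs, of m] xm by (auto simp: cyl_def shift_pow)
      note pb = pullback[OF xfs xlm this]
      define qD where "qD = map (the \<circ> x) [0..<m] @ []"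
      have TD: "\<forall>j\<le>k. Phi y (j + m) = Some d" if y: "y \<in> cyl qD F \<inter> Lam" for y
      proof (intro allI impI)
        fix j assume "j \<le> k"
        have yL: "y \<in> Lam" using y by simp
        have "(shift ^^ m) y \<in> cyl [] F \<inter> Lam" using pb(2) y Lpow[OF yL] by (auto simp: qD_def)
        then have "(shift ^^ j) ((shift ^^ m) y) \<in> C (Some d)" using Fsh \<open>j \<le> k\<close> by blast
        moreover have "(shift ^^ j) ((shift ^^ m) y) = (shift ^^ (j + m)) y" by (simp add: funpow_add)
        ultimately show "Phi y (j + m) = Some d" using memC[OF yL] by simp
      qed
      have xD: "x \<in> cyl qD F" using pb(1) by (simp add: qD_def)
      have xTD: "\<forall>j\<le>k. Phi x (j + m) = Some d" using TD[of x] xD xL by simp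
      have "\<exists>q G. finite G \<and> x \<in> cyl q G \<and> cyl q G \<inter> Lam \<subseteq> (\<Inter>i\<in>{..<m}. T i)"
      proof (rule nbhd_Inter[OF _ xfs])
        fix i assume "i \<in> {..<m}"
        then have "i \<le> k" "\<forall>j<i. x j \<noteq> None" using mk xlm by auto
        then show "\<exists>q G. finite G \<and> x \<in> cyl q G \<and> cyl q G \<inter> Lam \<subseteq> T i" by (rule goodT)
      qed simp
      then obtain q1 G1 where q1: "finite G1" "x \<in> cyl q1 G1" "cyl q1 G1 \<inter> Lam \<subseteq> (\<Inter>i\<in>{..<m}. T i)" by blast
      from cyl_Int[OF q1(2) xD q1(1) Ffin] obtain q G where qG: "finite G" "x \<in> cyl q G"
        "cyl q G \<subseteq> cyl q1 G1 \<inter> cyl qD F" by blast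
      have "cyl q G \<inter> Lam \<subseteq> Phi -` cyl w H \<inter> Lam"
      proof
        fix y assume y: "y \<in> cyl q G \<inter> Lam"
        then have y1: "y \<in> cyl q1 G1 \<inter> Lam" "y \<in> cyl qD F \<inter> Lam" using qG(3) by auto
        have yL: "y \<in> Lam" using y by simp
        have yD: "\<forall>j\<le>k. Phi y (j + m) = Some d" by (rule TD[OF y1(2)])
        show "y \<in> Phi -` cyl w H \<inter> Lam"
        proof (rule concl[OF yL])
          fix i assume ik: "i \<le> k"
          show "y \<in> T i"
          proof (cases "i < m")
            case True then show ?thesis using q1(3) y1(1) by blast
          next
            case False
            then have "i - m \<le> k" "i - m + m = i" using ik by auto
            then have "Phi y i = Phi x i" using yD[rule_format, of "i - m"] xTD[rule_format, of "i - m"] by simp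
            then show ?thesis using yL ik xw(2) by (cases "i < k") (auto simp: T_def)
          qed
        qed
      qed
      then show ?thesis using qG(1,2) by blast
    qed
  qed
  have ctop: "continuous_map (subtopology shift_top Lam) shift_top Phi"
  proof -
    have "continuous_map (subtopology shift_top Lam) (topology_generated_by (gen_cylinders :: 'b seq set set)) Phi"
    proof (rule continuous_on_generated_topo)
      show "Phi ` topspace (subtopology shift_top Lam) \<subseteq> \<Union>(gen_cylinders :: 'b seq set set)"
        using top_sub PhiG Union_gen by auto
      fix U :: "'b seq set" assume "U \<in> gen_cylinders"
      then obtain w H where U: "U = cyl w H" "finite H" by (auto simp: gen_cylinders_eq)
      show "openin (subtopology shift_top Lam) (Phi -` U \<inter> topspace (subtopology shift_top Lam))"
        unfolding top_sub U(1)
      proof (rule sub_open)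
        show "Phi -` cyl w H \<inter> Lam \<subseteq> Lam" by blast
        fix x assume "x \<in> Phi -` cyl w H \<inter> Lam"
        then show "\<exists>q G. finite G \<and> x \<in> cyl q G \<and> cyl q G \<inter> Lam \<subseteq> Phi -` cyl w H \<inter> Lam"
          by (rule main[OF U(2)])
      qed
    qed
    then show ?thesis unfolding shift_top_def .
  qed
  have "continuous_map (subtopology shift_top Lam) (subtopology shift_top Gam) Phi"
    unfolding continuous_map_in_subtopology using ctop PG top_sub by auto
  then show ?thesis using comm by blast
qed

theorem mainTheorem2:
  fixes Lam :: "'a::countable seq set" and Gam :: "'b::countable seq set"
    and Phi :: "'a seq \<Rightarrow> 'b seq" and d :: 'b
  assumes "shift_space Lam" and "shift_space Gam"
    and "Phi ` Lam \<subseteq> Gam"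
    and "Phi empty_seq = (\<lambda>_. Some d)"
    and "empty_seq \<in> Gam \<Longrightarrow> finitely_defined Lam {x \<in> Lam. Phi x = empty_seq}"
  shows "(continuous_map (subtopology shift_top Lam) (subtopology shift_top Gam) Phi \<and>
          (\<forall>x\<in>Lam. Phi (shift x) = shift (Phi x)))
     \<longleftrightarrow>
         (\<exists>C :: 'b option \<Rightarrow> 'a seq set.
            sliding_block_code Lam C Phi \<and>
            C None = {x \<in> Lam. Phi x = empty_seq} \<and>
            (\<forall>a. a \<notin> letters Gam \<longrightarrow> C (Some a) = {}) \<and>
            (\<forall>a \<in> letters Gam. \<exists>G. finite G \<and>
                 G \<subseteq> {Z \<inter> Lam | Z. Z \<in> gen_cylinders} \<and> C (Some a) = \<Union>G) \<and>
            finite {a \<in> letters Gam. C (Some a) \<noteq> {}} \<and>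
            (\<forall>M::nat. M \<ge> 1 \<longrightarrow> (\<exists>F. finite F \<and> F \<subseteq> letters Lam \<and>
                 (\<forall>n. 1 \<le> n \<and> n \<le> M \<longrightarrow>
                    (shift ^^ (n - 1)) ` (gen_cyl empty_seq F \<inter> Lam) \<subseteq> C (Some d)))))"
proof
  assume L: "continuous_map (subtopology shift_top Lam) (subtopology shift_top Gam) Phi \<and>
          (\<forall>x\<in>Lam. Phi (shift x) = shift (Phi x))"
  show "\<exists>C :: 'b option \<Rightarrow> 'a seq set.
            sliding_block_code Lam C Phi \<and>
            C None = {x \<in> Lam. Phi x = empty_seq} \<and>
            (\<forall>a. a \<notin> letters Gam \<longrightarrow> C (Some a) = {}) \<and>
            (\<forall>a \<in> letters Gam. \<exists>G. finite G \<and>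
                 G \<subseteq> {Z \<inter> Lam | Z. Z \<in> gen_cylinders} \<and> C (Some a) = \<Union>G) \<and>
            finite {a \<in> letters Gam. C (Some a) \<noteq> {}} \<and>
            (\<forall>M::nat. M \<ge> 1 \<longrightarrow> (\<exists>F. finite F \<and> F \<subseteq> letters Lam \<and>
                 (\<forall>n. 1 \<le> n \<and> n \<le> M \<longrightarrow>
                    (shift ^^ (n - 1)) ` (gen_cyl empty_seq F \<inter> Lam) \<subseteq> C (Some d))))"
    by (rule forward[OF assms conjunct1[OF L] conjunct2[OF L]])
next
  assume "\<exists>C :: 'b option \<Rightarrow> 'a seq set.
            sliding_block_code Lam C Phi \<and>
            C None = {x \<in> Lam. Phi x = empty_seq} \<and>
            (\<forall>a. a \<notin> letters Gam \<longrightarrow> C (Some a) = {}) \<and>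
            (\<forall>a \<in> letters Gam. \<exists>G. finite G \<and>
                 G \<subseteq> {Z \<inter> Lam | Z. Z \<in> gen_cylinders} \<and> C (Some a) = \<Union>G) \<and>
            finite {a \<in> letters Gam. C (Some a) \<noteq> {}} \<and>
            (\<forall>M::nat. M \<ge> 1 \<longrightarrow> (\<exists>F. finite F \<and> F \<subseteq> letters Lam \<and>
                 (\<forall>n. 1 \<le> n \<and> n \<le> M \<longrightarrow>
                    (shift ^^ (n - 1)) ` (gen_cyl empty_seq F \<inter> Lam) \<subseteq> C (Some d))))"
  then obtain C :: "'b option \<Rightarrow> 'a seq set" where C:
     "sliding_block_code Lam C Phi \<and>
            C None = {x \<in> Lam. Phi x = empty_seq} \<and>
            (\<forall>a. a \<notin> letters Gam \<longrightarrow> C (Some a) = {}) \<and>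
            (\<forall>a \<in> letters Gam. \<exists>G. finite G \<and>
                 G \<subseteq> {Z \<inter> Lam | Z. Z \<in> gen_cylinders} \<and> C (Some a) = \<Union>G) \<and>
            finite {a \<in> letters Gam. C (Some a) \<noteq> {}} \<and>
            (\<forall>M::nat. M \<ge> 1 \<longrightarrow> (\<exists>F. finite F \<and> F \<subseteq> letters Lam \<and>
                 (\<forall>n. 1 \<le> n \<and> n \<le> M \<longrightarrow>
                    (shift ^^ (n - 1)) ` (gen_cyl empty_seq F \<inter> Lam) \<subseteq> C (Some d))))"
    by (rule exE)
  show "continuous_map (subtopology shift_top Lam) (subtopology shift_top Gam) Phi \<and>
          (\<forall>x\<in>Lam. Phi (shift x) = shift (Phi x))"
    using C apply (elim conjE)
    apply (rule backward[OF assms(1,2,3)])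
       apply assumption+
    done
qed

end
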